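(* $\varphi(I_n^{0,1})=\varphi(I_n^0)=\mathring{\mathcal{P}}_n$.
   Context: $B_n$ is the group of signed permutations $w=w_1\dots w_n$ of $[n]$ (bijections of $\{\pm1,\dots,\pm n\}$ with $w(-i)=-w(i)$), values ordered $\cdots<-2<-1<1<2<\cdots$, with $w_0=0$; $\mathrm{Des}(w)=\{i\in\{0,\dots,n-1\}: w_i>w_{i+1}\}$. For $J\subseteq\{0,\dots,n-1\}$, $X_J=\sum_{\mathrm{Des}(w)\subseteq J}w\in\mathbb{Q}B_n$. $I_n^0=\mathrm{span}\{X_J: 0\in J\}$ and $I_n^{0,1}=\mathrm{span}\{X_J: 0\in J \text{ or } 1\in J\}$. $\varphi:\mathbb{Q}B_n\to\mathbb{Q}\mathfrak{S}_n$ is the linear map forgetting signs, $w\mapsto|w_1|\dots|w_n|$. For $u\in\mathfrak{S}_n$, $\mathring{\mathrm{Peak}}(u)=\{i\in\{2,\dots,n-1\}: u_{i-1}<u_i>u_{i+1}\}$; $\mathring{\mathcal{F}}_n$ is the set of subsets of $\{2,\dots,n-1\}$ with no two consecutive integers; $\mathring{P}_F=\sum_{\mathring{\mathrm{Peak}}(u)=F}u$ and $\mathring{\mathcal{P}}_n=\mathrm{span}\{\mathring{P}_F: F\in\mathring{\mathcal{F}}_n\}$. *)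

theory Defs
  imports Complex_Main
begin

text \<open>A signed permutation w of [n] is represented by its window [w_1,...,w_n] (an int list);
  an ordinary permutation u of [n] by the int list [u_1,...,u_n].
  Elements of the group algebras QB_n, QS_n are functions int list => rat
  (coefficient of each basis element), supported on the respective group.\<close>

definition signed_perms :: "nat \<Rightarrow> int list set" where
  "signed_perms n = {w. length w = n \<and> set (map abs w) = {1..int n}}"

definition perms :: "nat \<Rightarrow> int list set" where
  "perms n = {u. length u = n \<and> set u = {1..int n}}"

text \<open>w_i with the convention w_0 = 0 (1-indexed).\<close>
definition wval :: "int list \<Rightarrow> nat \<Rightarrow> int" where
  "wval w i = (if i = 0 then 0 else w ! (i - 1))"

definition Des_B :: "int list \<Rightarrow> nat set" where
  "Des_B w = {i. i < length w \<and> wval w i > wval w (Suc i)}"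

definition X_B :: "nat \<Rightarrow> nat set \<Rightarrow> (int list \<Rightarrow> rat)" where
  "X_B n J = (\<lambda>w. if w \<in> signed_perms n \<and> Des_B w \<subseteq> J then 1 else 0)"

definition qspan :: "('a \<Rightarrow> rat) set \<Rightarrow> ('a \<Rightarrow> rat) set" where
  "qspan S = {v. \<exists>F c. finite F \<and> F \<subseteq> S \<and> v = (\<lambda>x. \<Sum>f\<in>F. c f * f x)}"

definition I0 :: "nat \<Rightarrow> (int list \<Rightarrow> rat) set" where
  "I0 n = qspan {X_B n J | J. J \<subseteq> {0..<n} \<and> 0 \<in> J}"

definition I01 :: "nat \<Rightarrow> (int list \<Rightarrow> rat) set" where
  "I01 n = qspan {X_B n J | J. J \<subseteq> {0..<n} \<and> (0 \<in> J \<or> 1 \<in> J)}"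

definition phi :: "nat \<Rightarrow> (int list \<Rightarrow> rat) \<Rightarrow> (int list \<Rightarrow> rat)" where
  "phi n f = (\<lambda>u. \<Sum>w\<in>{w \<in> signed_perms n. map abs w = u}. f w)"

text \<open>Interior peak set (1-indexed positions i in {2..n-1}).\<close>
definition int_peak :: "int list \<Rightarrow> nat set" where
  "int_peak u = {i. 2 \<le> i \<and> i + 1 \<le> length u \<and> u ! (i - 2) < u ! (i - 1) \<and> u ! (i - 1) > u ! i}"

definition int_peak_sets :: "nat \<Rightarrow> nat set set" where
  "int_peak_sets n = {F. F \<subseteq> {2..n - 1} \<and> (\<forall>i\<in>F. Suc i \<notin> F)}"

definition P_peak :: "nat \<Rightarrow> nat set \<Rightarrow> (int list \<Rightarrow> rat)" where
  "P_peak n F = (\<lambda>u. if u \<in> perms n \<and> int_peak u = F then 1 else 0)"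

definition peak_space :: "nat \<Rightarrow> (int list \<Rightarrow> rat) set" where
  "peak_space n = qspan {P_peak n F | F. F \<in> int_peak_sets n}"

end

theory Submission
  imports Defs "HOL-Library.Function_Algebras"
begin


definition sc :: "rat \<Rightarrow> (int list \<Rightarrow> rat) \<Rightarrow> (int list \<Rightarrow> rat)" where
  "sc c f = (\<lambda>x. c * f x)"

lemma module_sc: "module sc"
  by unfold_locales (auto simp: sc_def fun_eq_iff algebra_simps)

lemma sum_fun_apply: "(\<Sum>a\<in>t. f a) x = (\<Sum>a\<in>t. f a x)"
  by (induct t rule: infinite_finite_induct) auto

lemma qspan_span: "qspan S = module.span sc S"
  unfolding qspan_def module.span_explicit[OF module_sc]
  by (auto simp: sum_fun_apply sc_def fun_eq_iff)

lemma phi_hom: "module_hom sc sc (phi n)"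
  unfolding module_hom_iff
  by (auto simp: module_sc phi_def sc_def fun_eq_iff sum.distrib sum_distrib_left)

lemma phi_span: "phi n ` qspan S = qspan (phi n ` S)"
  unfolding qspan_span using module_hom.span_image[OF phi_hom] by metis

lemma count_lits:
  fixes pos :: "nat \<Rightarrow> nat" and val :: "nat \<Rightarrow> bool"
  assumes "pos ` S \<subseteq> {0..<n}"
  shows "card {N \<in> Pow {0..<n}. \<forall>i\<in>S. (pos i \<in> N \<longleftrightarrow> val i)} =
    (if (\<forall>i\<in>S. \<forall>i'\<in>S. pos i = pos i' \<longrightarrow> val i = val i') then 2 ^ (n - card (pos ` S)) else 0)"
proof (cases "\<forall>i\<in>S. \<forall>i'\<in>S. pos i = pos i' \<longrightarrow> val i = val i'")
  case True
  define P where "P = pos ` S"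
  define Q where "Q = pos ` {i\<in>S. val i}"
  have QP: "Q \<subseteq> P" unfolding P_def Q_def by auto
  have eq: "{N \<in> Pow {0..<n}. \<forall>i\<in>S. (pos i \<in> N \<longleftrightarrow> val i)} = (\<lambda>M. M \<union> Q) ` Pow ({0..<n} - P)"
  proof (intro equalityI subsetI)
    fix N assume N: "N \<in> {N \<in> Pow {0..<n}. \<forall>i\<in>S. (pos i \<in> N \<longleftrightarrow> val i)}"
    have "N = (N - P) \<union> Q"
    proof (intro equalityI subsetI)
      fix x assume x: "x \<in> N"
      show "x \<in> (N - P) \<union> Q"
      proof (cases "x \<in> P")
        case True
        then obtain i where "i \<in> S" "x = pos i" unfolding P_def by auto
        then show ?thesis using N x unfolding Q_def by auto
      qed (use x in auto)
    next
      fix x assume x: "x \<in> (N - P) \<union> Q"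
      then show "x \<in> N" using N unfolding Q_def by auto
    qed
    moreover have "N - P \<in> Pow ({0..<n} - P)" using N by auto
    ultimately show "N \<in> (\<lambda>M. M \<union> Q) ` Pow ({0..<n} - P)" by blast
  next
    fix N assume "N \<in> (\<lambda>M. M \<union> Q) ` Pow ({0..<n} - P)"
    then obtain M where M: "M \<subseteq> {0..<n} - P" "N = M \<union> Q" by auto
    have "\<forall>i\<in>S. (pos i \<in> N \<longleftrightarrow> val i)"
    proof
      fix i assume i: "i \<in> S"
      have "pos i \<notin> M" using M i unfolding P_def by auto
      moreover have "pos i \<in> Q \<longleftrightarrow> val i"
      proof
        assume "pos i \<in> Q"
        then obtain j where "j \<in> S" "val j" "pos i = pos j" unfolding Q_def by auto
        then show "val i" using True i by metis
      next
        assume "val i" then show "pos i \<in> Q" using i unfolding Q_def by auto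
      qed
      ultimately show "pos i \<in> N \<longleftrightarrow> val i" using M by auto
    qed
    moreover have "N \<subseteq> {0..<n}" using M QP assms unfolding P_def by auto
    ultimately show "N \<in> {N \<in> Pow {0..<n}. \<forall>i\<in>S. (pos i \<in> N \<longleftrightarrow> val i)}" by auto
  qed
  have inj: "inj_on (\<lambda>M. M \<union> Q) (Pow ({0..<n} - P))"
  proof (rule inj_onI)
    fix M M' assume "M \<in> Pow ({0..<n} - P)" "M' \<in> Pow ({0..<n} - P)" "M \<union> Q = M' \<union> Q"
    then show "M = M'" using QP by blast
  qed
  have "card ((\<lambda>M. M \<union> Q) ` Pow ({0..<n} - P)) = 2 ^ card ({0..<n} - P)"
    using card_image[OF inj] by (simp add: card_Pow)
  also have "card ({0..<n} - P) = n - card P"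
    using assms unfolding P_def by (subst card_Diff_subset) (auto intro: finite_subset)
  finally have "card {N \<in> Pow {0..<n}. \<forall>i\<in>S. (pos i \<in> N \<longleftrightarrow> val i)} = 2 ^ (n - card P)"
    by (simp only: eq)
  then show ?thesis unfolding P_def by (simp only: if_P[OF True])
next
  case False
  then obtain i i' where ii: "i \<in> S" "i' \<in> S" "pos i = pos i'" "val i \<noteq> val i'" by blast
  have "{N \<in> Pow {0..<n}. \<forall>i\<in>S. (pos i \<in> N \<longleftrightarrow> val i)} = {}"
  proof (rule ccontr)
    assume "{N \<in> Pow {0..<n}. \<forall>i\<in>S. (pos i \<in> N \<longleftrightarrow> val i)} \<noteq> {}"
    then obtain N where "\<forall>i\<in>S. (pos i \<in> N \<longleftrightarrow> val i)" by blast
    then show False using ii by metis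
  qed
  then show ?thesis by (subst if_not_P[OF False]) simp
qed



lemma perms_props:
  assumes "u \<in> perms n"
  shows "length u = n" "distinct u" "\<And>k. k < n \<Longrightarrow> u ! k > 0"
proof -
  show len: "length u = n" using assms by (simp add: perms_def)
  have "card (set u) = n" using assms by (simp add: perms_def)
  then show "distinct u" using len card_distinct by metis
  fix k assume "k < n"
  then have "u ! k \<in> set u" using len by simp
  then show "u ! k > 0" using assms by (auto simp: perms_def)
qed

definition sa :: "nat set \<Rightarrow> int list \<Rightarrow> int list" where
  "sa N u = map (\<lambda>k. if k \<in> N then - (u ! k) else u ! k) [0..<length u]"

lemma sa_len[simp]: "length (sa N u) = length u"
  by (simp add: sa_def)

lemma sa_nth: "k < length u \<Longrightarrow> sa N u ! k = (if k \<in> N then - (u ! k) else u ! k)"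
  by (simp add: sa_def)

lemma abs_sa:
  assumes "u \<in> perms n" shows "map abs (sa N u) = u"
proof (rule nth_equalityI)
  show "length (map abs (sa N u)) = length u" by simp
  fix k assume "k < length (map abs (sa N u))"
  then have k: "k < n" using perms_props(1)[OF assms] by simp
  then show "map abs (sa N u) ! k = u ! k"
    using perms_props(3)[OF assms k] perms_props(1)[OF assms] by (simp add: sa_nth)
qed

lemma fiber:
  assumes "u \<in> perms n"
  shows "{w \<in> signed_perms n. map abs w = u} = (\<lambda>N. sa N u) ` Pow {0..<n}"
proof (intro equalityI subsetI)
  fix w assume "w \<in> {w \<in> signed_perms n. map abs w = u}"
  then have w: "length w = n" "map abs w = u" by (auto simp: signed_perms_def)
  define N where "N = {k. k < n \<and> w ! k < 0}"
  have "w = sa N u"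
  proof (rule nth_equalityI)
    show "length w = length (sa N u)" using w by auto
    fix k assume "k < length w"
    then have k: "k < n" using w by simp
    have "u ! k = \<bar>w ! k\<bar>" using w k by auto
    then show "w ! k = sa N u ! k" using k w by (auto simp: sa_nth N_def)
  qed
  moreover have "N \<in> Pow {0..<n}" by (auto simp: N_def)
  ultimately show "w \<in> (\<lambda>N. sa N u) ` Pow {0..<n}" by blast
next
  fix w assume "w \<in> (\<lambda>N. sa N u) ` Pow {0..<n}"
  then obtain N where w: "w = sa N u" by blast
  have "map abs w = u" using abs_sa[OF assms] w by simp
  moreover have "length w = n" using w perms_props(1)[OF assms] by simp
  moreover have "set (map abs w) = {1..int n}"
  proof -
    have "set (map abs w) = set u" using \<open>map abs w = u\<close> by simp
    then show ?thesis using assms by (simp add: perms_def)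
  qed
  ultimately show "w \<in> {w \<in> signed_perms n. map abs w = u}" unfolding signed_perms_def by blast
qed

lemma inj_sa:
  assumes "u \<in> perms n"
  shows "inj_on (\<lambda>N. sa N u) (Pow {0..<n})"
proof (rule inj_onI)
  fix N M assume NM: "N \<in> Pow {0..<n}" "M \<in> Pow {0..<n}" "sa N u = sa M u"
  show "N = M"
  proof (intro equalityI subsetI)
    fix k assume "k \<in> N"
    then have k: "k < n" using NM by auto
    have "sa N u ! k = sa M u ! k" using NM by simp
    moreover have "u ! k > 0" using perms_props(3)[OF assms k] .
    ultimately show "k \<in> M" using \<open>k \<in> N\<close> k perms_props(1)[OF assms] by (auto simp: sa_nth split: if_splits)
  next
    fix k assume "k \<in> M"
    then have k: "k < n" using NM by auto
    have "sa N u ! k = sa M u ! k" using NM by simp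
    moreover have "u ! k > 0" using perms_props(3)[OF assms k] .
    ultimately show "k \<in> N" using \<open>k \<in> M\<close> k perms_props(1)[OF assms] by (auto simp: sa_nth split: if_splits)
  qed
qed

lemma fiber_empty:
  assumes "u \<notin> perms n"
  shows "{w \<in> signed_perms n. map abs w = u} = {}"
  using assms by (auto simp: signed_perms_def perms_def)

lemma phi_out: "u \<notin> perms n \<Longrightarrow> phi n f u = 0"
  by (simp add: phi_def fiber_empty)

lemma phi_X_card:
  assumes "u \<in> perms n"
  shows "phi n (X_B n J) u = (of_nat (card {N \<in> Pow {0..<n}. Des_B (sa N u) \<subseteq> J}) :: rat)"
proof -
  have "phi n (X_B n J) u = (\<Sum>N\<in>Pow {0..<n}. X_B n J (sa N u))"
    unfolding phi_def fiber[OF assms] by (simp add: sum.reindex[OF inj_sa[OF assms]])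
  also have "\<dots> = (\<Sum>N\<in>Pow {0..<n}. if Des_B (sa N u) \<subseteq> J then 1 else 0)"
  proof (rule sum.cong)
    fix N assume "N \<in> Pow {0..<n}"
    then have "sa N u \<in> signed_perms n" using fiber[OF assms] by blast
    then show "X_B n J (sa N u) = (if Des_B (sa N u) \<subseteq> J then 1 else 0)" by (simp add: X_B_def)
  qed simp
  also have "\<dots> = (of_nat (card {N \<in> Pow {0..<n}. Des_B (sa N u) \<subseteq> J}) :: rat)"
    by (simp add: sum.If_cases Int_def)
  finally show ?thesis .
qed

definition pos :: "int list \<Rightarrow> nat \<Rightarrow> nat" where
  "pos u i = (if i = 0 then 0 else if u ! (i - 1) < u ! i then i else i - 1)"

definition val :: "int list \<Rightarrow> nat \<Rightarrow> bool" where
  "val u i = (i \<noteq> 0 \<and> \<not> u ! (i - 1) < u ! i)"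

lemma des_step:
  assumes "u \<in> perms n" "i < n"
  shows "(\<not> wval (sa N u) i > wval (sa N u) (Suc i)) \<longleftrightarrow> (pos u i \<in> N \<longleftrightarrow> val u i)"
proof (cases "i = 0")
  case True
  have "u ! 0 > 0" using perms_props(3)[OF assms(1)] assms(2) True by simp
  then show ?thesis using True assms(2) perms_props(1)[OF assms(1)]
    by (auto simp: wval_def sa_nth pos_def val_def)
next
  case False
  have l: "length u = n" using perms_props(1)[OF assms(1)] .
  have p1: "u ! (i - 1) > 0" "u ! i > 0" using perms_props(3)[OF assms(1)] assms(2) by auto
  have ne: "u ! (i - 1) \<noteq> u ! i"
    using perms_props(2)[OF assms(1)] assms(2) l False by (simp add: nth_eq_iff_index_eq)
  have w1: "wval (sa N u) i = (if i - 1 \<in> N then - (u ! (i - 1)) else u ! (i - 1))"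
    using False assms(2) l by (simp add: wval_def sa_nth)
  have w2: "wval (sa N u) (Suc i) = (if i \<in> N then - (u ! i) else u ! i)"
    using assms(2) l by (simp add: wval_def sa_nth)
  show ?thesis unfolding w1 w2 pos_def val_def using False p1 ne by auto
qed

lemma des_iff:
  assumes "u \<in> perms n"
  shows "(Des_B (sa N u) \<subseteq> J) \<longleftrightarrow> (\<forall>i\<in>{0..<n} - J. (pos u i \<in> N \<longleftrightarrow> val u i))"
proof -
  have l: "length (sa N u) = n" using perms_props(1)[OF assms] by simp
  have "(Des_B (sa N u) \<subseteq> J) \<longleftrightarrow> (\<forall>i\<in>{0..<n} - J. \<not> wval (sa N u) i > wval (sa N u) (Suc i))"
    unfolding Des_B_def l by auto
  also have "\<dots> \<longleftrightarrow> (\<forall>i\<in>{0..<n} - J. (pos u i \<in> N \<longleftrightarrow> val u i))"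
    using des_step[OF assms] by auto
  finally show ?thesis .
qed



lemma peak_ips:
  assumes "u \<in> perms n"
  shows "int_peak u \<in> int_peak_sets n"
proof -
  have l: "length u = n" using perms_props(1)[OF assms] .
  have "int_peak u \<subseteq> {2..n - 1}" using l by (auto simp: int_peak_def)
  moreover have "\<forall>i\<in>int_peak u. Suc i \<notin> int_peak u"
    by (auto simp: int_peak_def)
  ultimately show ?thesis by (simp add: int_peak_sets_def)
qed

lemma phi_X:
  assumes u: "u \<in> perms n" and J: "J \<subseteq> {0..<n}" and J01: "0 \<in> J \<or> 1 \<in> J"
  shows "phi n (X_B n J) u = (if \<forall>j\<in>int_peak u. j - 1 \<in> J \<or> j \<in> J then 2 ^ card J else 0 :: rat)"
proof -
  define S where "S = {0..<n} - J"
  have l: "length u = n" using perms_props(1)[OF u] .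
  have dist: "distinct u" using perms_props(2)[OF u] .
  have eq1: "phi n (X_B n J) u = (of_nat (card {N \<in> Pow {0..<n}. \<forall>i\<in>S. (pos u i \<in> N \<longleftrightarrow> val u i)}) :: rat)"
    unfolding phi_X_card[OF u] S_def using des_iff[OF u] by (metis (no_types, lifting) PowD)
  have posS: "pos u ` S \<subseteq> {0..<n}" unfolding S_def pos_def by auto
  have conflict: "\<exists>j\<in>int_peak u. j - 1 \<notin> J \<and> j \<notin> J"
    if ii: "i \<in> S" "i' \<in> S" "i < i'" "pos u i = pos u i'" for i i'
  proof -
    have "pos u i \<le> i" by (simp add: pos_def)
    moreover have "pos u i' \<ge> i' - 1" by (simp add: pos_def)
    ultimately have i': "i' = Suc i" using ii by linarith
    then have pi': "pos u i' = i" using ii \<open>pos u i \<le> i\<close> by (auto simp: pos_def split: if_splits)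
    then have nlt: "\<not> u ! i < u ! Suc i" using i' by (auto simp: pos_def split: if_splits)
    have pi: "pos u i = i" using pi' ii by simp
    have "i \<noteq> 0"
    proof
      assume "i = 0"
      then have "0 \<notin> J" "1 \<notin> J" using ii i' unfolding S_def by auto
      then show False using J01 by simp
    qed
    then have lt: "u ! (i - 1) < u ! i" using pi by (auto simp: pos_def split: if_splits)
    have si: "Suc i < n" using ii i' unfolding S_def by auto
    have "u ! i \<noteq> u ! Suc i" using dist si l by (simp add: nth_eq_iff_index_eq)
    then have gt: "u ! i > u ! Suc i" using nlt by simp
    have "Suc i \<in> int_peak u" unfolding int_peak_def using \<open>i \<noteq> 0\<close> si l lt gt
      by (auto simp: numeral_2_eq_2)
    moreover have "Suc i - 1 \<notin> J \<and> Suc i \<notin> J" using ii i' unfolding S_def by auto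
    ultimately show ?thesis by blast
  qed
  have witness: "j - 1 \<in> S \<and> j \<in> S \<and> pos u (j - 1) = pos u j \<and> \<not> val u (j - 1) \<and> val u j"
    if j: "j \<in> int_peak u" "j - 1 \<notin> J" "j \<notin> J" for j
  proof -
    have jj: "2 \<le> j" "j + 1 \<le> n" "u ! (j - 2) < u ! (j - 1)" "u ! (j - 1) > u ! j"
      using j(1) l by (auto simp: int_peak_def)
    have e: "j - 1 - 1 = j - 2" by simp
    show ?thesis using jj j(2,3) unfolding S_def pos_def val_def e by auto
  qed
  have eq2: "phi n (X_B n J) u = (of_nat (if (\<forall>i\<in>S. \<forall>i'\<in>S. pos u i = pos u i' \<longrightarrow> val u i = val u i') then 2 ^ (n - card (pos u ` S)) else 0) :: rat)"
    using eq1 count_lits[OF posS, of "val u"] by simp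
  show ?thesis
  proof (cases "\<forall>j\<in>int_peak u. j - 1 \<in> J \<or> j \<in> J")
    case True
    have cons: "\<forall>i\<in>S. \<forall>i'\<in>S. pos u i = pos u i' \<longrightarrow> val u i = val u i'"
    proof (intro ballI impI)
      fix i i' assume "i \<in> S" "i' \<in> S" "pos u i = pos u i'"
      then have "i = i'" using conflict True
        by (metis linorder_neqE_nat)
      then show "val u i = val u i'" by simp
    qed
    have inj: "inj_on (pos u) S"
    proof (rule inj_onI)
      fix i i' assume "i \<in> S" "i' \<in> S" "pos u i = pos u i'"
      then show "i = i'" using conflict True
        by (metis linorder_neqE_nat)
    qed
    have "card S = n - card J"
      unfolding S_def using J by (simp add: card_Diff_subset finite_subset)
    then have "card (pos u ` S) = n - card J" using card_image[OF inj] by simp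
    moreover have "card J \<le> n" using J card_mono[OF _ J] by simp
    ultimately have "n - card (pos u ` S) = card J" by simp
    then show ?thesis unfolding eq2 if_P[OF cons] if_P[OF True] by simp
  next
    case False
    then obtain j where j: "j \<in> int_peak u" "j - 1 \<notin> J" "j \<notin> J" by auto
    have ncons: "\<not> (\<forall>i\<in>S. \<forall>i'\<in>S. pos u i = pos u i' \<longrightarrow> val u i = val u i')"
      using witness[OF j] by blast
    show ?thesis unfolding eq2 if_not_P[OF ncons] if_not_P[OF False] by simp
  qed
qed



definition cl :: "nat set \<Rightarrow> nat set" where
  "cl B = B \<union> {Suc j | j. j \<in> B \<and> Suc (Suc j) \<in> B}"

definition Sset :: "nat set \<Rightarrow> nat set" where
  "Sset B = cl B \<union> {j. Suc j \<in> cl B}"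

definition Jset :: "nat \<Rightarrow> nat set \<Rightarrow> nat set" where
  "Jset n B = {0..<n} - Sset B"

definition hfun :: "nat \<Rightarrow> nat set \<Rightarrow> int list \<Rightarrow> rat" where
  "hfun n J = (\<lambda>u. if u \<in> perms n \<and> (\<forall>j\<in>int_peak u. j - 1 \<in> J \<or> j \<in> J) then 1 else 0)"

definition gfun :: "nat \<Rightarrow> nat set \<Rightarrow> int list \<Rightarrow> rat" where
  "gfun n B = (\<lambda>u. if u \<in> perms n \<and> B \<subseteq> int_peak u then 1 else 0)"

definition Wn :: "nat \<Rightarrow> (int list \<Rightarrow> rat) set" where
  "Wn n = module.span sc {hfun n J | J. J \<subseteq> {0..<n} \<and> 0 \<in> J}"

lemma finite_ips: "finite (int_peak_sets n)"
proof -
  have "int_peak_sets n \<subseteq> Pow {2..n-1}" by (auto simp: int_peak_sets_def)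
  then show ?thesis by (rule finite_subset) simp
qed

lemma cl_sub:
  assumes "B \<in> int_peak_sets n" shows "cl B \<subseteq> {2..n-1}"
proof -
  have B: "B \<subseteq> {2..n-1}" using assms by (simp add: int_peak_sets_def)
  have "Suc j \<in> {2..n-1}" if "j \<in> B" "Suc (Suc j) \<in> B" for j
  proof -
    have "j \<ge> 2" "Suc (Suc j) \<le> n - 1" using B that by auto
    then show ?thesis by auto
  qed
  then show ?thesis using B unfolding cl_def by blast
qed

lemma key_S: "1 \<le> j \<Longrightarrow> (j - 1 \<in> Sset B \<and> j \<in> Sset B) \<longleftrightarrow> j \<in> cl B"
proof
  assume j: "1 \<le> j" and "j \<in> cl B"
  then show "j - 1 \<in> Sset B \<and> j \<in> Sset B" by (auto simp: Sset_def)
next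
  assume j: "1 \<le> j" and h: "j - 1 \<in> Sset B \<and> j \<in> Sset B"
  have sj: "Suc (j - 1) = j" using j by simp
  show "j \<in> cl B"
  proof (rule ccontr)
    assume nj: "j \<notin> cl B"
    have "j \<in> cl B \<or> Suc j \<in> cl B" using h by (simp add: Sset_def)
    then have a: "Suc j \<in> cl B" using nj by blast
    have "j - 1 \<in> cl B \<or> Suc (j - 1) \<in> cl B" using h by (simp add: Sset_def)
    then have c: "j - 1 \<in> cl B" using nj sj by simp
    have b1: "j - 1 \<in> B"
    proof (rule ccontr)
      assume "j - 1 \<notin> B"
      then obtain k where k: "j - 1 = Suc k" "Suc (Suc k) \<in> B" using c unfolding cl_def by blast
      then have "Suc (Suc k) = j" using sj by simp
      then have "j \<in> B" using k by simp
      then show False using nj unfolding cl_def by blast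
    qed
    have b2: "Suc j \<in> B"
    proof (rule ccontr)
      assume "Suc j \<notin> B"
      then have "j \<in> B" using a unfolding cl_def by blast
      then show False using nj unfolding cl_def by blast
    qed
    have "Suc (Suc (j - 1)) \<in> B" using b2 sj by simp
    then have "Suc (j - 1) \<in> cl B" using b1 unfolding cl_def by blast
    then show False using nj sj by simp
  qed
qed

lemma hfun_J:
  assumes B: "B \<in> int_peak_sets n"
  shows "hfun n (Jset n B) = (\<lambda>u. if u \<in> perms n \<and> int_peak u \<inter> cl B = {} then 1 else 0)"
proof
  fix u
  show "hfun n (Jset n B) u = (if u \<in> perms n \<and> int_peak u \<inter> cl B = {} then 1 else 0)"
  proof (cases "u \<in> perms n")
    case True
    have ip: "int_peak u \<subseteq> {2..n-1}" using peak_ips[OF True] by (simp add: int_peak_sets_def)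
    have "(\<forall>j\<in>int_peak u. j - 1 \<in> Jset n B \<or> j \<in> Jset n B) \<longleftrightarrow> int_peak u \<inter> cl B = {}"
    proof -
      have "\<And>j. j \<in> int_peak u \<Longrightarrow> (j - 1 \<in> Jset n B \<or> j \<in> Jset n B) \<longleftrightarrow> j \<notin> cl B"
      proof -
        fix j assume "j \<in> int_peak u"
        then have j: "2 \<le> j" "j \<le> n - 1" using ip by auto
        then have "j < n" "j - 1 < n" by auto
        then have "(j - 1 \<in> Jset n B \<or> j \<in> Jset n B) \<longleftrightarrow> \<not> (j - 1 \<in> Sset B \<and> j \<in> Sset B)"
          by (auto simp: Jset_def)
        also have "\<dots> \<longleftrightarrow> j \<notin> cl B" using key_S[of j B] j by simp
        finally show "(j - 1 \<in> Jset n B \<or> j \<in> Jset n B) \<longleftrightarrow> j \<notin> cl B" .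
      qed
      then show ?thesis by blast
    qed
    then show ?thesis using True by (simp add: hfun_def)
  next
    case False
    then show ?thesis by (simp add: hfun_def)
  qed
qed

lemma Jset_ok:
  assumes B: "B \<in> int_peak_sets n" and n: "n \<ge> 1"
  shows "Jset n B \<subseteq> {0..<n} \<and> 0 \<in> Jset n B"
proof -
  have "0 \<notin> Sset B" using cl_sub[OF B] by (auto simp: Sset_def)
  then show ?thesis using n by (auto simp: Jset_def)
qed

lemma alt_sum:
  assumes "finite T"
  shows "(\<Sum>C\<in>Pow T. (-1) ^ card C * (if C \<subseteq> F then 1 else 0 :: rat)) = (if F \<inter> T = {} then 1 else 0)"
  using assms
proof (induct T rule: finite_induct)
  case empty
  then show ?case by simp
next
  case (insert x T)
  have fin: "finite (Pow T)" "finite (insert x ` Pow T)" using insert by auto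
  have disj: "Pow T \<inter> insert x ` Pow T = {}" using insert by auto
  have inj: "inj_on (insert x) (Pow T)" using insert by (auto simp: inj_on_def)
  have cardI: "card (insert x C) = Suc (card C)" if "C \<in> Pow T" for C
  proof -
    have "finite C" using that insert(1) by (auto intro: finite_subset)
    moreover have "x \<notin> C" using that insert(2) by auto
    ultimately show ?thesis by simp
  qed
  have "(\<Sum>C\<in>Pow (insert x T). (-1) ^ card C * (if C \<subseteq> F then 1 else 0 :: rat))
      = (\<Sum>C\<in>Pow T. (-1) ^ card C * (if C \<subseteq> F then 1 else 0 :: rat))
        + (\<Sum>C\<in>insert x ` Pow T. (-1) ^ card C * (if C \<subseteq> F then 1 else 0 :: rat))"
    unfolding Pow_insert using sum.union_disjoint[OF fin disj] by simp
  also have "(\<Sum>C\<in>insert x ` Pow T. (-1) ^ card C * (if C \<subseteq> F then 1 else 0 :: rat))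
      = (\<Sum>C\<in>Pow T. (-1) ^ card (insert x C) * (if insert x C \<subseteq> F then 1 else 0 :: rat))"
    by (rule sum.reindex[OF inj, unfolded comp_def])
  also have "\<dots> = (\<Sum>C\<in>Pow T. - ((if x \<in> F then 1 else 0) * ((-1) ^ card C * (if C \<subseteq> F then 1 else 0 :: rat))))"
    by (rule sum.cong) (auto simp: cardI)
  also have "\<dots> = - ((if x \<in> F then 1 else 0) * (\<Sum>C\<in>Pow T. (-1) ^ card C * (if C \<subseteq> F then 1 else 0 :: rat)))"
    by (simp add: sum_distrib_left sum_negf)
  finally show ?case using insert by auto
qed

lemma hfun_expand:
  assumes B: "B \<in> int_peak_sets n"
  shows "hfun n (Jset n B) = (\<Sum>C\<in>Pow (cl B). sc ((-1) ^ card C) (gfun n C))"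
proof
  fix u
  have fin: "finite (cl B)" using cl_sub[OF B] by (rule finite_subset) simp
  show "hfun n (Jset n B) u = (\<Sum>C\<in>Pow (cl B). sc ((-1) ^ card C) (gfun n C)) u"
  proof (cases "u \<in> perms n")
    case True
    then show ?thesis
      unfolding sum_fun_apply hfun_J[OF B] sc_def gfun_def
      using alt_sum[OF fin, of "int_peak u"] by (simp add: Int_commute)
  next
    case False
    then show ?thesis
      unfolding sum_fun_apply hfun_J[OF B] sc_def gfun_def by simp
  qed
qed

lemma sum_less:
  assumes B: "B \<in> int_peak_sets n" and C: "C \<subseteq> cl B" "\<forall>i\<in>C. Suc i \<notin> C" and ne: "C \<noteq> B"
  shows "\<Sum>C < \<Sum>B"
proof -
  have finB: "finite B" using B finite_ips by (auto simp: int_peak_sets_def intro: finite_subset)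
  have finC: "finite C" using C(1) cl_sub[OF B] by (auto intro: finite_subset)
  have pos: "\<And>x. x \<in> cl B \<Longrightarrow> x \<ge> 2" using cl_sub[OF B] by auto
  define f where "f c = (if c \<in> B then c else Suc c)" for c
  have fB: "f c \<in> B" if "c \<in> C" for c
  proof (cases "c \<in> B")
    case False
    have "c \<in> cl B" using C(1) that by auto
    then obtain j where "c = Suc j" "j \<in> B" "Suc (Suc j) \<in> B" using False unfolding cl_def by blast
    then show ?thesis using False by (simp add: f_def)
  qed (simp add: f_def)
  have inj: "inj_on f C"
  proof (rule inj_onI)
    fix c c' assume cc: "c \<in> C" "c' \<in> C" "f c = f c'"
    show "c = c'"
      using cc C(2) by (auto simp: f_def split: if_splits)
  qed
  have le: "\<forall>c\<in>C. c \<le> f c" by (simp add: f_def)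
  show ?thesis
  proof (cases "C \<subseteq> B")
    case True
    then have "C \<subset> B" using ne by auto
    then obtain b where b: "b \<in> B" "b \<notin> C" by auto
    have "b \<ge> 2" using pos b by (auto simp: cl_def)
    have "\<Sum>C \<le> \<Sum>(B - {b})" using True b by (intro sum_mono2) (auto simp: finB)
    also have "\<Sum>(B - {b}) < \<Sum>B" using sum.remove[OF finB b(1), of "\<lambda>x. x"] \<open>b \<ge> 2\<close> by simp
    finally show ?thesis .
  next
    case False
    then obtain c where c: "c \<in> C" "c \<notin> B" by auto
    have "\<exists>a\<in>C. a < f a" using c by (auto simp: f_def)
    from sum_strict_mono_ex1[OF finC le this] have "\<Sum>C < sum f C" by simp
    also have "sum f C = \<Sum>(f ` C)" using sum.reindex[OF inj, of "\<lambda>x. x"] by simp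
    also have "\<dots> \<le> \<Sum>B" using fB by (intro sum_mono2) (auto simp: finB)
    finally show ?thesis .
  qed
qed

lemma gfun_zero:
  assumes "\<not> (\<forall>i\<in>C. Suc i \<notin> C)"
  shows "gfun n C = 0"
proof
  fix u
  show "gfun n C u = 0 u"
  proof (cases "u \<in> perms n \<and> C \<subseteq> int_peak u")
    case True
    then have "\<forall>i\<in>int_peak u. Suc i \<notin> int_peak u" using peak_ips[of u n] by (simp add: int_peak_sets_def)
    then have "\<forall>i\<in>C. Suc i \<notin> C" using True by blast
    then show ?thesis using assms by blast
  qed (simp add: gfun_def)
qed

lemma gfun_W:
  assumes n: "n \<ge> 1"
  shows "B \<in> int_peak_sets n \<Longrightarrow> gfun n B \<in> Wn n"
proof (induct "\<Sum>B" arbitrary: B rule: less_induct)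
  case less
  note B = less.prems
  note M = module_sc
  have fin: "finite (Pow (cl B))" using cl_sub[OF B] by (simp add: finite_subset)
  have BinP: "B \<in> Pow (cl B)" by (auto simp: cl_def)
  have hW: "hfun n (Jset n B) \<in> Wn n"
    unfolding Wn_def using Jset_ok[OF B n] by (intro module.span_base[OF M]) blast
  have rest: "(\<Sum>C\<in>Pow (cl B) - {B}. sc ((-1) ^ card C) (gfun n C)) \<in> Wn n"
    unfolding Wn_def
  proof (intro module.span_sum[OF M] module.span_scale[OF M])
    fix C assume C: "C \<in> Pow (cl B) - {B}"
    show "gfun n C \<in> module.span sc {hfun n J | J. J \<subseteq> {0..<n} \<and> 0 \<in> J}"
    proof (cases "\<forall>i\<in>C. Suc i \<notin> C")
      case True
      have Ci: "C \<in> int_peak_sets n" using True C cl_sub[OF B] by (auto simp: int_peak_sets_def)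
      have Cl: "\<Sum>C < \<Sum>B" using sum_less[OF B _ True] C by auto
      show ?thesis using less.hyps[OF Cl Ci] unfolding Wn_def .
    next
      case False
      show ?thesis unfolding gfun_zero[OF False] by (rule module.span_zero[OF M])
    qed
  qed
  have "hfun n (Jset n B) = sc ((-1) ^ card B) (gfun n B) + (\<Sum>C\<in>Pow (cl B) - {B}. sc ((-1) ^ card C) (gfun n C))"
    unfolding hfun_expand[OF B] by (rule sum.remove[OF fin BinP])
  then have eq: "sc ((-1) ^ card B) (gfun n B) = hfun n (Jset n B) - (\<Sum>C\<in>Pow (cl B) - {B}. sc ((-1) ^ card C) (gfun n C))"
    by (simp add: algebra_simps)
  have "hfun n (Jset n B) - (\<Sum>C\<in>Pow (cl B) - {B}. sc ((-1) ^ card C) (gfun n C)) \<in> Wn n"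
    using hW rest unfolding Wn_def by (rule module.span_diff[OF M])
  then have "sc ((-1) ^ card B) (gfun n B) \<in> Wn n" unfolding eq .
  then have "sc ((-1) ^ card B) (sc ((-1) ^ card B) (gfun n B)) \<in> Wn n"
    unfolding Wn_def by (rule module.span_scale[OF M])
  moreover have "sc ((-1) ^ card B) (sc ((-1) ^ card B) (gfun n B)) = gfun n B"
    by (simp add: sc_def fun_eq_iff power_mult_distrib[symmetric])
  ultimately show ?case by simp
qed

lemma sum_P_peak:
  assumes "finite A"
  shows "(\<Sum>F\<in>A. P_peak n F) u = (if u \<in> perms n \<and> int_peak u \<in> A then 1 else 0)"
  unfolding sum_fun_apply P_peak_def using assms by (cases "u \<in> perms n") auto

lemma P_W:
  assumes n: "n \<ge> 1"
  shows "A \<in> int_peak_sets n \<Longrightarrow> P_peak n A \<in> Wn n"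
proof (induct "n - card A" arbitrary: A rule: less_induct)
  case less
  note A = less.prems
  note M = module_sc
  define Up where "Up = {F \<in> int_peak_sets n. A \<subseteq> F}"
  have finU: "finite Up" unfolding Up_def using finite_ips by simp
  have AU: "A \<in> Up" using A by (simp add: Up_def)
  have g: "gfun n A = (\<Sum>F\<in>Up. P_peak n F)"
  proof
    fix u show "gfun n A u = (\<Sum>F\<in>Up. P_peak n F) u"
    proof (cases "u \<in> perms n")
      case True
      then have "int_peak u \<in> int_peak_sets n" by (rule peak_ips)
      then have "int_peak u \<in> Up \<longleftrightarrow> A \<subseteq> int_peak u" unfolding Up_def by blast
      then show ?thesis unfolding sum_P_peak[OF finU] gfun_def using True by simp
    next
      case False
      then show ?thesis unfolding sum_P_peak[OF finU] gfun_def by simp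
    qed
  qed
  have "gfun n A = P_peak n A + (\<Sum>F\<in>Up - {A}. P_peak n F)"
    unfolding g using sum.remove[OF finU AU] by simp
  then have eq: "P_peak n A = gfun n A - (\<Sum>F\<in>Up - {A}. P_peak n F)" by (simp add: algebra_simps)
  have rest: "(\<Sum>F\<in>Up - {A}. P_peak n F) \<in> Wn n"
    unfolding Wn_def
  proof (intro module.span_sum[OF M])
    fix F assume F: "F \<in> Up - {A}"
    then have Fi: "F \<in> int_peak_sets n" "A \<subset> F" by (auto simp: Up_def)
    have finF: "finite F" using Fi(1) by (auto simp: int_peak_sets_def intro: finite_subset)
    have "card A < card F" using psubset_card_mono[OF finF Fi(2)] .
    moreover have "card F \<le> n"
    proof -
      have "F \<subseteq> {2..n-1}" using Fi(1) by (simp add: int_peak_sets_def)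
      then have "F \<subseteq> {0..<n}" using n by force
      then show ?thesis using card_mono[of "{0..<n}" F] by simp
    qed
    ultimately have "n - card F < n - card A" by simp
    then show "P_peak n F \<in> module.span sc {hfun n J | J. J \<subseteq> {0..<n} \<and> 0 \<in> J}"
      using less.hyps Fi(1) unfolding Wn_def by blast
  qed
  have "gfun n A - (\<Sum>F\<in>Up - {A}. P_peak n F) \<in> Wn n"
    using gfun_W[OF n A] rest unfolding Wn_def by (rule module.span_diff[OF M])
  then show ?case using eq by metis
qed



lemma phi_X_h:
  assumes J: "J \<subseteq> {0..<n}" "0 \<in> J \<or> 1 \<in> J"
  shows "phi n (X_B n J) = sc (2 ^ card J) (hfun n J)"
proof
  fix u
  show "phi n (X_B n J) u = sc (2 ^ card J) (hfun n J) u"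
  proof (cases "u \<in> perms n")
    case True
    show ?thesis unfolding phi_X[OF True J] sc_def hfun_def using True by simp
  next
    case False
    show ?thesis unfolding phi_out[OF False] sc_def hfun_def using False by simp
  qed
qed

lemma hfun_peak: "hfun n J \<in> peak_space n"
proof -
  define A where "A = {F \<in> int_peak_sets n. \<forall>j\<in>F. j - 1 \<in> J \<or> j \<in> J}"
  have finA: "finite A" unfolding A_def using finite_ips by simp
  have "hfun n J = (\<Sum>F\<in>A. P_peak n F)"
  proof
    fix u show "hfun n J u = (\<Sum>F\<in>A. P_peak n F) u"
    proof (cases "u \<in> perms n")
      case True
      then have "int_peak u \<in> int_peak_sets n" by (rule peak_ips)
      then have "int_peak u \<in> A \<longleftrightarrow> (\<forall>j\<in>int_peak u. j - 1 \<in> J \<or> j \<in> J)" unfolding A_def by blast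
      then show ?thesis unfolding sum_P_peak[OF finA] hfun_def using True by simp
    next
      case False
      then show ?thesis unfolding sum_P_peak[OF finA] hfun_def by simp
    qed
  qed
  also have "\<dots> \<in> peak_space n"
    unfolding peak_space_def qspan_span
  proof (rule module.span_sum[OF module_sc])
    fix F assume "F \<in> A"
    then show "P_peak n F \<in> module.span sc {P_peak n F |F. F \<in> int_peak_sets n}"
      unfolding A_def by (intro module.span_base[OF module_sc]) blast
  qed
  finally show ?thesis .
qed

theorem theorem5p9:
  fixes n :: nat
  assumes "n \<ge> 1"
  shows "phi n ` I01 n = peak_space n \<and> phi n ` I0 n = peak_space n"
proof -
  note M = module_sc
  define S0 where "S0 = {X_B n J | J. J \<subseteq> {0..<n} \<and> 0 \<in> J}"
  define S01 where "S01 = {X_B n J | J. J \<subseteq> {0..<n} \<and> (0 \<in> J \<or> 1 \<in> J)}"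
  have e0: "phi n ` I0 n = module.span sc (phi n ` S0)"
    unfolding I0_def S0_def by (subst phi_span) (simp only: qspan_span)
  have e01: "phi n ` I01 n = module.span sc (phi n ` S01)"
    unfolding I01_def S01_def by (subst phi_span) (simp only: qspan_span)
  have ps: "peak_space n = module.span sc {P_peak n F |F. F \<in> int_peak_sets n}"
    unfolding peak_space_def qspan_span ..
  have sub1: "module.span sc (phi n ` S01) \<subseteq> peak_space n"
  proof (rule module.span_minimal[OF M])
    show "phi n ` S01 \<subseteq> peak_space n"
    proof
      fix x assume "x \<in> phi n ` S01"
      then obtain J where J: "J \<subseteq> {0..<n}" "0 \<in> J \<or> 1 \<in> J" "x = phi n (X_B n J)"
        unfolding S01_def by blast
      have h: "hfun n J \<in> module.span sc {P_peak n F |F. F \<in> int_peak_sets n}"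
        using hfun_peak[of n J] unfolding ps .
      have "sc (2 ^ card J) (hfun n J) \<in> peak_space n"
        unfolding ps using h by (rule module.span_scale[OF M])
      then show "x \<in> peak_space n" using phi_X_h[OF J(1,2)] J(3) by simp
    qed
    show "module.subspace sc (peak_space n)" unfolding ps by (rule module.subspace_span[OF M])
  qed
  have sub2: "module.span sc (phi n ` S0) \<subseteq> module.span sc (phi n ` S01)"
    by (rule module.span_mono[OF M]) (auto simp: S0_def S01_def)
  have W: "Wn n \<subseteq> module.span sc (phi n ` S0)"
    unfolding Wn_def
  proof (rule module.span_minimal[OF M])
    show "{hfun n J |J. J \<subseteq> {0..<n} \<and> 0 \<in> J} \<subseteq> module.span sc (phi n ` S0)"
    proof
      fix x assume "x \<in> {hfun n J |J. J \<subseteq> {0..<n} \<and> 0 \<in> J}"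
      then obtain J where J: "J \<subseteq> {0..<n}" "0 \<in> J" "x = hfun n J" by blast
      have "phi n (X_B n J) \<in> phi n ` S0" unfolding S0_def using J by blast
      then have "sc (1 / 2 ^ card J) (phi n (X_B n J)) \<in> module.span sc (phi n ` S0)"
        by (intro module.span_scale[OF M] module.span_base[OF M])
      moreover have "sc (1 / 2 ^ card J) (phi n (X_B n J)) = x"
        using phi_X_h[of J n] J by (simp add: sc_def fun_eq_iff)
      ultimately show "x \<in> module.span sc (phi n ` S0)" by simp
    qed
  qed (rule module.subspace_span[OF M])
  have sub3: "peak_space n \<subseteq> module.span sc (phi n ` S0)"
    unfolding ps
  proof (rule module.span_minimal[OF M])
    show "{P_peak n F |F. F \<in> int_peak_sets n} \<subseteq> module.span sc (phi n ` S0)"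
      using P_W[OF assms] W by blast
  qed (rule module.subspace_span[OF M])
  show ?thesis unfolding e0 e01 using sub1 sub2 sub3 by blast
qed

end
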